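(* Let $\eta>0$, let $C$ be a cost vector, and let $S=\sum_{ij\in\mathcal E}\Big[\log\sum_{x_i,x_j\in\chi}e^{-\eta C_{ij}(x_i,x_j)}+\sum_{x_i,x_j\in\chi}\frac{\eta}{d^2}C_{ij}(x_i,x_j)\Big]+\sum_{i\in\mathcal V}\Big[\log\sum_{x\in\chi}e^{-\eta C_i(x)}+\sum_{x\in\chi}\frac{\eta}{d}C_i(x)\Big]$ and $\mathcal S_0=\min\big(\|\eta C/d+\exp(-\eta C)\|_1,\,S\big)$. For any $\epsilon>0$, the EMP algorithm (run with parameters $C,\eta,\epsilon$) reaches an iterate satisfying $\|\Gamma_{ij}\mathbb 1-\Gamma_i\|_1<\epsilon$ and $\|\Gamma_{ij}^\top\mathbb 1-\Gamma_j\|_1<\epsilon$ for all $ij\in\mathcal E$ within $\lceil 4\mathcal S_0(\deg(G)+1)/\epsilon^2\rceil$ iterations for EMP-cyclic and within $\lceil 4\mathcal S_0/\epsilon^2\rceil$ iterations for EMP-greedy.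
   Context: Let $G=(\mathcal V,\mathcal E)$ be a graph with $\mathcal V=\{1,\dots,n\}$, every vertex on at least one edge, edges written as ordered pairs $ij$, $\deg(G)$ its maximum degree, and $\chi=\{0,\dots,d-1\}$. A marginal vector $\Gamma$ consists of $\Gamma_i\in\mathbb R^d$ ($i\in\mathcal V$) and $\Gamma_{ij}\in\mathbb R^{d\times d}$ ($ij\in\mathcal E$); a cost vector $C$ has the same shape; $\exp$ is entrywise, $\|\cdot\|_1$ is the sum of absolute values of all entries, $\mathbb 1$ is the all-ones vector. Define the following update maps on positive marginal vectors (all components not mentioned are unchanged): $\mathcal P_{ij\to i}$: $\Gamma_{ij}(x_i,x_j)\leftarrow\Gamma_{ij}(x_i,x_j)\sqrt{\Gamma_i(x_i)/\sum_x\Gamma_{ij}(x_i,x)}$, $\Gamma_i(x_i)\leftarrow\Gamma_i(x_i)\sqrt{\sum_x\Gamma_{ij}(x_i,x)/\Gamma_i(x_i)}$; $\mathcal P_{ij,i}$: divide $\Gamma_i$ and $\Gamma_{ij}$ each by the sum of its entries; $\mathcal P_{ij\to j}$: $\Gamma_{ij}(x_i,x_j)\leftarrow\Gamma_{ij}(x_i,x_j)\sqrt{\Gamma_j(x_j)/\sum_x\Gamma_{ij}(x,x_j)}$, $\Gamma_j(x_j)\leftarrow\Gamma_j(x_j)\sqrt{\sum_x\Gamma_{ij}(x,x_j)/\Gamma_j(x_j)}$; $\mathcal P_{ij,j}$: divide $\Gamma_j$ and $\Gamma_{ij}$ each by the sum of its entries. (These are the Bregman projections w.r.t. $\sum\Gamma(\log\Gamma-1)$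 onto the sets where the row sums of $\Gamma_{ij}$ equal $\Gamma_i$, where $\Gamma_i$ and $\Gamma_{ij}$ sum to one, etc.) EMP starts from $\Gamma^{(1)}$ obtained from $\exp(-\eta C)$ by normalizing each $\Gamma_i$ and each $\Gamma_{ij}$ to sum to $1$. At iteration $k$, if $\max_{ij\in\mathcal E}\max\{\|\Gamma^{(k)}_{ij}\mathbb 1-\Gamma^{(k)}_i\|_1,\|(\Gamma^{(k)}_{ij})^\top\mathbb 1-\Gamma^{(k)}_j\|_1\}<\epsilon$ the algorithm stops and outputs the rounding $x_i=\arg\max_x\Gamma^{(k)}_i(x)$. Otherwise: EMP-cyclic applies, for each edge $ij\in\mathcal E$ in a fixed order, $\mathcal P_{ij,j}\circ\mathcal P_{ij\to j}\circ\mathcal P_{ij,i}\circ\mathcal P_{ij\to i}$, the result being $\Gamma^{(k+1)}$; EMP-greedy picks an edge $ij$ maximizing $\max\{\|\Gamma^{(k)}_{ij}\mathbb 1-\Gamma^{(k)}_i\|_1,\|(\Gamma^{(k)}_{ij})^\top\mathbb 1-\Gamma^{(k)}_j\|_1\}$ and sets $\Gamma^{(k+1)}=\mathcal P_{ij,i}\circ\mathcal P_{ij\to i}(\Gamma^{(k)})$ if $\|\Gamma^{(k)}_{ij}\mathbb 1-\Gamma^{(k)}_i\|_1>\|(\Gamma^{(k)}_{ij})^\top\mathbb 1-\Gamma^{(k)}_j\|_1$ and $\Gamma^{(k+1)}=\mathcal P_{ij,j}\circ\mathcal P_{ij\to j}(\Gamma^{(k)})$ otherwise. *)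

theory Defs
  imports Complex_Main
begin

text \<open>Marginal vectors / cost vectors: node components Gamma_i(x) and edge
components Gamma_ij(x,y), states x,y in {0..<d}.\<close>

record mvec =
  nd :: "nat \<Rightarrow> nat \<Rightarrow> real"
  ed :: "nat \<times> nat \<Rightarrow> nat \<Rightarrow> nat \<Rightarrow> real"

definition graph_ok :: "nat \<Rightarrow> (nat \<times> nat) set \<Rightarrow> bool" where
  "graph_ok n E \<longleftrightarrow> E \<subseteq> {1..n} \<times> {1..n} \<and> (\<forall>(i,j)\<in>E. i \<noteq> j \<and> (j,i) \<notin> E)
     \<and> (\<forall>v\<in>{1..n}. \<exists>e\<in>E. fst e = v \<or> snd e = v)"

definition max_deg :: "nat \<Rightarrow> (nat \<times> nat) set \<Rightarrow> nat" where
  "max_deg n E = Max (insert 0 ((\<lambda>v. card {e\<in>E. fst e = v \<or> snd e = v}) ` {1..n}))"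

definition rowsum :: "nat \<Rightarrow> mvec \<Rightarrow> nat \<times> nat \<Rightarrow> nat \<Rightarrow> real" where
  "rowsum d G e xi = (\<Sum>x<d. ed G e xi x)"

definition colsum :: "nat \<Rightarrow> mvec \<Rightarrow> nat \<times> nat \<Rightarrow> nat \<Rightarrow> real" where
  "colsum d G e xj = (\<Sum>x<d. ed G e x xj)"

definition proj_i :: "nat \<Rightarrow> nat \<times> nat \<Rightarrow> mvec \<Rightarrow> mvec" where
  "proj_i d e G = (let i = fst e in
     G\<lparr> ed := (ed G)(e := (\<lambda>xi xj. ed G e xi xj * sqrt (nd G i xi / rowsum d G e xi))),
        nd := (nd G)(i := (\<lambda>xi. nd G i xi * sqrt (rowsum d G e xi / nd G i xi))) \<rparr>)"

definition proj_j :: "nat \<Rightarrow> nat \<times> nat \<Rightarrow> mvec \<Rightarrow> mvec" where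
  "proj_j d e G = (let j = snd e in
     G\<lparr> ed := (ed G)(e := (\<lambda>xi xj. ed G e xi xj * sqrt (nd G j xj / colsum d G e xj))),
        nd := (nd G)(j := (\<lambda>xj. nd G j xj * sqrt (colsum d G e xj / nd G j xj))) \<rparr>)"

definition norm_at :: "nat \<Rightarrow> nat \<times> nat \<Rightarrow> nat \<Rightarrow> mvec \<Rightarrow> mvec" where
  "norm_at d e v G =
     G\<lparr> ed := (ed G)(e := (\<lambda>x y. ed G e x y / (\<Sum>a<d. \<Sum>b<d. ed G e a b))),
        nd := (nd G)(v := (\<lambda>x. nd G v x / (\<Sum>a<d. nd G v a))) \<rparr>"

definition viol_i :: "nat \<Rightarrow> mvec \<Rightarrow> nat \<times> nat \<Rightarrow> real" where
  "viol_i d G e = (\<Sum>x<d. \<bar>rowsum d G e x - nd G (fst e) x\<bar>)"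

definition viol_j :: "nat \<Rightarrow> mvec \<Rightarrow> nat \<times> nat \<Rightarrow> real" where
  "viol_j d G e = (\<Sum>x<d. \<bar>colsum d G e x - nd G (snd e) x\<bar>)"

definition stop_crit :: "nat \<Rightarrow> (nat \<times> nat) set \<Rightarrow> real \<Rightarrow> mvec \<Rightarrow> bool" where
  "stop_crit d E \<epsilon> G \<longleftrightarrow> (\<forall>e\<in>E. viol_i d G e < \<epsilon> \<and> viol_j d G e < \<epsilon>)"

definition emp_init :: "nat \<Rightarrow> real \<Rightarrow> mvec \<Rightarrow> mvec" where
  "emp_init d \<eta> C =
     \<lparr> nd = (\<lambda>i x. exp (- \<eta> * nd C i x) / (\<Sum>a<d. exp (- \<eta> * nd C i a))),
       ed = (\<lambda>e x y. exp (- \<eta> * ed C e x y) / (\<Sum>a<d. \<Sum>b<d. exp (- \<eta> * ed C e a b))) \<rparr>"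

definition edge_step :: "nat \<Rightarrow> nat \<times> nat \<Rightarrow> mvec \<Rightarrow> mvec" where
  "edge_step d e G =
     norm_at d e (snd e) (proj_j d e (norm_at d e (fst e) (proj_i d e G)))"

definition cyclic_step :: "nat \<Rightarrow> (nat \<times> nat) list \<Rightarrow> mvec \<Rightarrow> mvec" where
  "cyclic_step d order G = fold (edge_step d) order G"

definition greedy_update :: "nat \<Rightarrow> nat \<times> nat \<Rightarrow> mvec \<Rightarrow> mvec" where
  "greedy_update d e G =
     (if viol_i d G e > viol_j d G e then norm_at d e (fst e) (proj_i d e G)
      else norm_at d e (snd e) (proj_j d e G))"

definition viol :: "nat \<Rightarrow> mvec \<Rightarrow> nat \<times> nat \<Rightarrow> real" where
  "viol d G e = max (viol_i d G e) (viol_j d G e)"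

definition S_val :: "nat \<Rightarrow> (nat \<times> nat) set \<Rightarrow> nat \<Rightarrow> real \<Rightarrow> mvec \<Rightarrow> real" where
  "S_val n E d \<eta> C =
     (\<Sum>e\<in>E. ln (\<Sum>x<d. \<Sum>y<d. exp (- \<eta> * ed C e x y))
              + (\<Sum>x<d. \<Sum>y<d. \<eta> / (real d)^2 * ed C e x y))
   + (\<Sum>i\<in>{1..n}. ln (\<Sum>x<d. exp (- \<eta> * nd C i x)) + (\<Sum>x<d. \<eta> / real d * nd C i x))"

definition L1_term :: "nat \<Rightarrow> (nat \<times> nat) set \<Rightarrow> nat \<Rightarrow> real \<Rightarrow> mvec \<Rightarrow> real" where
  "L1_term n E d \<eta> C =
     (\<Sum>e\<in>E. \<Sum>x<d. \<Sum>y<d. \<bar>\<eta> * ed C e x y / real d + exp (- \<eta> * ed C e x y)\<bar>)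
   + (\<Sum>i\<in>{1..n}. \<Sum>x<d. \<bar>\<eta> * nd C i x / real d + exp (- \<eta> * nd C i x)\<bar>)"

definition S0 :: "nat \<Rightarrow> (nat \<times> nat) set \<Rightarrow> nat \<Rightarrow> real \<Rightarrow> mvec \<Rightarrow> real" where
  "S0 n E d \<eta> C = min (L1_term n E d \<eta> C) (S_val n E d \<eta> C)"

end

theory Submission
  imports Defs "HOL-Analysis.Convex"
begin

definition pv :: "nat \<Rightarrow> (nat \<Rightarrow> real) \<Rightarrow> bool" where
  "pv d p \<longleftrightarrow> (\<forall>a<d. 0 < p a) \<and> (\<Sum>a<d. p a) = 1"
definition pm :: "nat \<Rightarrow> (nat \<Rightarrow> nat \<Rightarrow> real) \<Rightarrow> bool" where
  "pm d P \<longleftrightarrow> (\<forall>a<d. \<forall>b<d. 0 < P a b) \<and> (\<Sum>a<d. \<Sum>b<d. P a b) = 1"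
definition klv :: "nat \<Rightarrow> (nat \<Rightarrow> real) \<Rightarrow> real" where
  "klv d p = (\<Sum>a<d. - ln (real d * p a) / real d)"
definition klm :: "nat \<Rightarrow> (nat \<Rightarrow> nat \<Rightarrow> real) \<Rightarrow> real" where
  "klm d P = (\<Sum>a<d. \<Sum>b<d. - ln (real d ^ 2 * P a b) / real d ^ 2)"
definition vd :: "nat \<Rightarrow> (nat \<Rightarrow> real) \<Rightarrow> (nat \<Rightarrow> real) \<Rightarrow> real" where
  "vd d p q = (\<Sum>a<d. \<bar>p a - q a\<bar>)"
definition md :: "nat \<Rightarrow> (nat \<Rightarrow> nat \<Rightarrow> real) \<Rightarrow> (nat \<Rightarrow> nat \<Rightarrow> real) \<Rightarrow> real" where
  "md d P Q = (\<Sum>a<d. \<Sum>b<d. \<bar>P a b - Q a b\<bar>)"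
definition rws :: "nat \<Rightarrow> (nat \<Rightarrow> nat \<Rightarrow> real) \<Rightarrow> nat \<Rightarrow> real" where
  "rws d P a = (\<Sum>b<d. P a b)"
definition pP :: "nat \<Rightarrow> (nat \<Rightarrow> nat \<Rightarrow> real) \<Rightarrow> (nat \<Rightarrow> real) \<Rightarrow> nat \<Rightarrow> nat \<Rightarrow> real" where
  "pP d P g = (\<lambda>a b. P a b * sqrt (g a / rws d P a))"
definition pg :: "nat \<Rightarrow> (nat \<Rightarrow> nat \<Rightarrow> real) \<Rightarrow> (nat \<Rightarrow> real) \<Rightarrow> nat \<Rightarrow> real" where
  "pg d P g = (\<lambda>a. g a * sqrt (rws d P a / g a))"
definition nP where
  "nP d P g = (\<lambda>a b. pP d P g a b / (\<Sum>a<d. \<Sum>b<d. pP d P g a b))"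
definition ng where
  "ng d P g = (\<lambda>a. pg d P g a / (\<Sum>a<d. pg d P g a))"

lemma sq_helper: assumes "0 < r" "0 \<le> g" shows "r * sqrt (g / r) = sqrt (g * r)"
proof -
  have sr: "0 < sqrt r" using assms by simp
  have "r * sqrt (g / r) = (sqrt r * sqrt r) * (sqrt g / sqrt r)" using assms by (simp add: real_sqrt_divide)
  also have "\<dots> = sqrt g * sqrt r" using sr by (simp add: field_simps)
  also have "\<dots> = sqrt (g * r)" by (simp add: real_sqrt_mult)
  finally show ?thesis .
qed

lemma cs_abs: "(\<Sum>a<d. \<bar>x a\<bar> * \<bar>y a\<bar>)^2 \<le> (\<Sum>a<d. (x a)^2) * (\<Sum>a<d. (y a :: real)^2)"
  using Cauchy_Schwarz_ineq_sum[of "\<lambda>a. \<bar>x a\<bar>" "\<lambda>a. \<bar>y a\<bar>" "{..<d}"] by simp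

lemma delta_bound:
  fixes \<delta> Z :: real
  assumes "0 \<le> \<delta>" "\<delta> \<le> 2" "\<delta>^2 \<le> 1 / Z^2 - 1" "0 < Z" "Z \<le> 1"
  shows "\<delta>^2 \<le> 4 * (- 2 * ln Z)"
proof (cases "Z \<ge> 1/2")
  case True
  define w where "w = Z * Z"
  have wpos: "0 < w" and w1: "w \<le> 1" unfolding w_def using assms True
    by (auto intro: mult_le_one)
  have "1/2 * (1/2) \<le> Z * Z" using True by (intro mult_mono) auto
  then have w4: "1/4 \<le> w" unfolding w_def by simp
  have lw: "ln w = 2 * ln Z" unfolding w_def using assms by (simp add: ln_mult_pos)
  have "ln w \<le> w - 1" using wpos by (rule ln_le_minus_one)
  then have A: "1 - w \<le> - 2 * ln Z" using lw by simp
  have "1 / Z^2 - 1 = (1 - w) * (1 / w)" unfolding w_def using assms by (simp add: field_simps power2_eq_square)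
  also have "\<dots> \<le> (1 - w) * 4" using w1 w4 wpos by (intro mult_left_mono) (auto simp: field_simps)
  finally show ?thesis using assms(3) A by simp
next
  case False
  have "ln Z \<le> Z - 1" using assms by (intro ln_le_minus_one) auto
  then have "1 \<le> - 2 * ln Z" using False by simp
  moreover have "\<delta>^2 \<le> 2^2" using assms by (intro power_mono) auto
  ultimately show ?thesis by simp
qed

lemma core:
  fixes d :: nat and g :: "nat \<Rightarrow> real" and P
  assumes d: "0 < d" and g: "pv d g" and P: "pm d P"
  defines "D \<equiv> klm d P + klv d g - klm d (nP d P g) - klv d (ng d P g)"
  shows "pv d (ng d P g)" "pm d (nP d P g)" "0 \<le> D"
    "(\<Sum>a<d. \<bar>rws d P a - g a\<bar>)^2 \<le> 4 * D"
    "(vd d (ng d P g) g)^2 \<le> 4 * D"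
    "(md d (nP d P g) P)^2 \<le> 4 * D"
proof -
  define r where "r = rws d P"
  define Z where "Z = (\<Sum>a<d. sqrt (g a * r a))"
  have gpos: "\<And>a. a < d \<Longrightarrow> 0 < g a" and gs: "(\<Sum>a<d. g a) = 1" using g by (auto simp: pv_def)
  have Ppos: "\<And>a b. a < d \<Longrightarrow> b < d \<Longrightarrow> 0 < P a b" and Ps: "(\<Sum>a<d. \<Sum>b<d. P a b) = 1"
    using P by (auto simp: pm_def)
  have rpos: "\<And>a. a < d \<Longrightarrow> 0 < r a"
    unfolding r_def rws_def using d Ppos by (intro sum_pos) auto
  have rs: "(\<Sum>a<d. r a) = 1" using Ps by (simp add: r_def rws_def)
  have Zpos: "0 < Z" unfolding Z_def using d gpos rpos by (intro sum_pos) auto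
  have "Z \<le> (\<Sum>a<d. (g a + r a) / 2)" unfolding Z_def
    using gpos rpos by (intro sum_mono arith_geo_mean_sqrt) (auto simp: less_imp_le)
  also have "\<dots> = 1" using gs rs by (simp add: sum_divide_distrib[symmetric] sum.distrib)
  finally have Zle: "Z \<le> 1" .
  have pP_eq: "\<And>a b. pP d P g a b = P a b * sqrt (g a / r a)" by (simp add: pP_def r_def)
  have pg_eq: "\<And>a. a < d \<Longrightarrow> pg d P g a = sqrt (g a * r a)"
    using sq_helper[of "g a" "r a" for a] gpos rpos by (simp add: pg_def r_def mult.commute less_imp_le)
  have totP: "(\<Sum>a<d. \<Sum>b<d. pP d P g a b) = Z"
  proof -
    have "(\<Sum>a<d. \<Sum>b<d. pP d P g a b) = (\<Sum>a<d. r a * sqrt (g a / r a))"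
      by (simp add: pP_eq r_def rws_def sum_distrib_right)
    also have "\<dots> = Z" unfolding Z_def using sq_helper rpos gpos by (intro sum.cong) (auto simp: less_imp_le)
    finally show ?thesis .
  qed
  have totg: "(\<Sum>a<d. pg d P g a) = Z" unfolding Z_def using pg_eq by simp
  have nP_eq: "\<And>a b. nP d P g a b = P a b * sqrt (g a / r a) / Z"
  proof -
    fix a b
    have "nP d P g a b = pP d P g a b / Z" unfolding nP_def by (subst totP) (rule refl)
    then show "nP d P g a b = P a b * sqrt (g a / r a) / Z" by (simp add: pP_eq)
  qed
  have ng_eq: "\<And>a. a < d \<Longrightarrow> ng d P g a = sqrt (g a * r a) / Z" unfolding ng_def totg using pg_eq by simp
  show "pv d (ng d P g)" unfolding pv_def
  proof (intro conjI allI impI)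
    fix a assume "a < d" then show "0 < ng d P g a" using ng_eq gpos rpos Zpos by simp
  next
    have "(\<Sum>a<d. ng d P g a) = (\<Sum>a<d. pg d P g a) / (\<Sum>a<d. pg d P g a)" unfolding ng_def
      by (rule sum_divide_distrib[symmetric])
    then show "(\<Sum>a<d. ng d P g a) = 1" using totg Zpos by simp
  qed
  show "pm d (nP d P g)" unfolding pm_def
  proof (intro conjI allI impI)
    fix a b assume "a < d" "b < d" then show "0 < nP d P g a b" using nP_eq Ppos gpos rpos Zpos by simp
  next
    have nPZ: "nP d P g = (\<lambda>a b. pP d P g a b / Z)" unfolding nP_def by (subst totP) (rule refl)
      have "(\<Sum>a<d. \<Sum>b<d. nP d P g a b) = (\<Sum>a<d. \<Sum>b<d. pP d P g a b) / Z"
        unfolding nPZ sum_divide_distrib by (rule refl)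
      then show "(\<Sum>a<d. \<Sum>b<d. nP d P g a b) = 1" using totP Zpos by simp
  qed
  note ngpv = \<open>pv d (ng d P g)\<close> and nPpm = \<open>pm d (nP d P g)\<close>
  have dpos: "0 < real d" using d by simp
  have lnP: "ln (real d ^ 2 * nP d P g a b) = ln (real d ^ 2 * P a b) + (ln (g a) - ln (r a)) / 2 - ln Z"
    if "a < d" "b < d" for a b
  proof -
    have "real d ^ 2 * nP d P g a b = (real d ^ 2 * P a b) * sqrt (g a / r a) / Z" using nP_eq by simp
    moreover have "ln (sqrt (g a / r a)) = (ln (g a) - ln (r a)) / 2"
    proof -
      have ga: "0 < g a" and ra: "0 < r a" using gpos rpos that by auto
      then have "ln (sqrt (g a / r a)) = ln (g a / r a) / 2" by (intro ln_sqrt) simp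
      also have "\<dots> = (ln (g a) - ln (r a)) / 2" using ga ra by (simp add: ln_divide_pos)
      finally show ?thesis .
    qed
    moreover have A: "0 < real d ^ 2 * P a b" using Ppos that dpos by simp
    moreover have B: "0 < sqrt (g a / r a)" using gpos rpos that by simp
    moreover have "ln ((real d ^ 2 * P a b) * sqrt (g a / r a) / Z) = ln (real d ^ 2 * P a b) + ln (sqrt (g a / r a)) - ln Z"
      by (simp only: ln_divide_pos[OF mult_pos_pos[OF A B] Zpos] ln_mult_pos[OF A B])
    ultimately show ?thesis by simp
  qed
  have lng: "ln (real d * ng d P g a) = ln (real d * g a) + (ln (r a) - ln (g a)) / 2 - ln Z"
    if "a < d" for a
  proof -
    have "real d * ng d P g a = real d * sqrt (g a * r a) / Z" using ng_eq that by simp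
    moreover have "ln (sqrt (g a * r a)) = (ln (g a) + ln (r a)) / 2"
    proof -
      have ga: "0 < g a" and ra: "0 < r a" using gpos rpos that by auto
      then have "ln (sqrt (g a * r a)) = ln (g a * r a) / 2" by (intro ln_sqrt) simp
      also have "\<dots> = (ln (g a) + ln (r a)) / 2" using ga ra by (simp add: ln_mult_pos)
      finally show ?thesis .
    qed
    moreover have B: "0 < sqrt (g a * r a)" using gpos rpos that by simp
    moreover have "ln (real d * sqrt (g a * r a) / Z) = ln (real d) + ln (sqrt (g a * r a)) - ln Z"
      by (simp only: ln_divide_pos[OF mult_pos_pos[OF dpos B] Zpos] ln_mult_pos[OF dpos B])
    moreover have "ln (real d * g a) = ln (real d) + ln (g a)" using dpos gpos that by (simp add: ln_mult_pos)
    ultimately show ?thesis by (simp add: field_simps)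
  qed
  have e1: "klm d P - klm d (nP d P g) = (\<Sum>a<d. ((ln (g a) - ln (r a)) / 2 - ln Z) / real d)"
  proof -
    have "klm d P - klm d (nP d P g) = (\<Sum>a<d. \<Sum>b<d. (ln (real d ^ 2 * nP d P g a b) - ln (real d ^ 2 * P a b)) / real d ^ 2)"
      unfolding klm_def by (simp add: sum_subtractf[symmetric] diff_divide_distrib)
    also have "\<dots> = (\<Sum>a<d. \<Sum>b<d. ((ln (g a) - ln (r a)) / 2 - ln Z) / real d ^ 2)"
      by (intro sum.cong refl) (simp add: lnP)
    also have "\<dots> = (\<Sum>a<d. ((ln (g a) - ln (r a)) / 2 - ln Z) / real d)"
      using dpos by (intro sum.cong refl) (simp add: power2_eq_square)
    finally show ?thesis .
  qed
  have e2: "klv d g - klv d (ng d P g) = (\<Sum>a<d. ((ln (r a) - ln (g a)) / 2 - ln Z) / real d)"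
  proof -
    have "klv d g - klv d (ng d P g) = (\<Sum>a<d. (ln (real d * ng d P g a) - ln (real d * g a)) / real d)"
      unfolding klv_def by (simp add: sum_subtractf[symmetric] diff_divide_distrib)
    also have "\<dots> = (\<Sum>a<d. ((ln (r a) - ln (g a)) / 2 - ln Z) / real d)"
      by (intro sum.cong refl) (simp add: lng)
    finally show ?thesis .
  qed
  have Deq: "D = - 2 * ln Z"
  proof -
    have "D = (klm d P - klm d (nP d P g)) + (klv d g - klv d (ng d P g))" unfolding D_def by simp
    also have "\<dots> = (\<Sum>a<d. (- 2 * ln Z) / real d)" unfolding e1 e2 sum.distrib[symmetric]
      by (intro sum.cong refl) (simp add: field_simps)
    also have "\<dots> = - 2 * ln Z" using dpos by simp
    finally show ?thesis .
  qed
  have sg: "\<And>a. a < d \<Longrightarrow> sqrt (g a) * sqrt (g a) = g a" using gpos by (simp add: less_imp_le)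
  have sr: "\<And>a. a < d \<Longrightarrow> sqrt (r a) * sqrt (r a) = r a" using rpos by (simp add: less_imp_le)
  have sgr: "\<And>a. sqrt (g a) * sqrt (r a) = sqrt (g a * r a)" by (simp add: real_sqrt_mult)
  have H2: "(\<Sum>a<d. (sqrt (g a) - sqrt (r a))^2) = 2 - 2 * Z"
  proof -
    have "(\<Sum>a<d. (sqrt (g a) - sqrt (r a))^2) = (\<Sum>a<d. g a + r a - 2 * sqrt (g a * r a))"
      using gpos rpos by (intro sum.cong refl) (auto simp: power2_eq_square algebra_simps sg sr less_imp_le simp flip: sgr)
    also have "\<dots> = 2 - 2 * Z" using gs rs by (simp add: sum.distrib sum_subtractf Z_def sum_distrib_left)
    finally show ?thesis .
  qed
  have lnZ: "ln Z \<le> Z - 1" using Zpos by (rule ln_le_minus_one)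
  have DH: "2 - 2 * Z \<le> D" using Deq lnZ by simp
  show "0 \<le> D" using DH Zle by simp
  have "(\<Sum>a<d. \<bar>rws d P a - g a\<bar>) = (\<Sum>a<d. \<bar>sqrt (g a) - sqrt (r a)\<bar> * \<bar>sqrt (g a) + sqrt (r a)\<bar>)"
  proof (intro sum.cong refl)
    fix a assume "a \<in> {..<d}"
    then have "rws d P a - g a = - ((sqrt (g a) - sqrt (r a)) * (sqrt (g a) + sqrt (r a)))"
      using sg sr by (simp add: r_def algebra_simps)
    then show "\<bar>rws d P a - g a\<bar> = \<bar>sqrt (g a) - sqrt (r a)\<bar> * \<bar>sqrt (g a) + sqrt (r a)\<bar>"
      by (simp add: abs_mult)
  qed
  then have cs1: "(\<Sum>a<d. \<bar>rws d P a - g a\<bar>)^2 \<le> (\<Sum>a<d. (sqrt (g a) - sqrt (r a))^2) * (\<Sum>a<d. (sqrt (g a) + sqrt (r a))^2)"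
    using cs_abs by simp
  have Hp: "(\<Sum>a<d. (sqrt (g a) + sqrt (r a))^2) = 2 + 2 * Z"
  proof -
    have "(\<Sum>a<d. (sqrt (g a) + sqrt (r a))^2) = (\<Sum>a<d. g a + r a + 2 * sqrt (g a * r a))"
      using gpos rpos by (intro sum.cong refl) (auto simp: power2_eq_square algebra_simps sg sr less_imp_le simp flip: sgr)
    also have "\<dots> = 2 + 2 * Z" using gs rs by (simp add: sum.distrib Z_def sum_distrib_left)
    finally show ?thesis .
  qed
  have "(\<Sum>a<d. \<bar>rws d P a - g a\<bar>)^2 \<le> (2 - 2 * Z) * (2 + 2 * Z)" using cs1 unfolding H2 Hp .
  also have "(2 - 2 * Z) * (2 + 2 * Z) \<le> (2 - 2 * Z) * 4" using Zle by (intro mult_left_mono) auto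
  also have "\<dots> \<le> 4 * D" using DH by simp
  finally show "(\<Sum>a<d. \<bar>rws d P a - g a\<bar>)^2 \<le> 4 * D" .
  have iZ: "(\<Sum>a<d. (sqrt (r a) / Z - sqrt (g a))^2) = 1 / Z^2 - 1"
  proof -
    have "(\<Sum>a<d. (sqrt (r a) / Z - sqrt (g a))^2) = (\<Sum>a<d. r a / Z^2 - 2 * sqrt (g a * r a) / Z + g a)"
      using gpos rpos Zpos by (intro sum.cong refl) (auto simp: power2_eq_square field_simps sg sr less_imp_le simp flip: sgr)
    also have "\<dots> = (\<Sum>a<d. r a) / Z^2 - 2 * Z / Z + (\<Sum>a<d. g a)"
      by (simp add: sum.distrib sum_subtractf sum_divide_distrib sum_distrib_left Z_def)
    also have "\<dots> = 1 / Z^2 - 1" using rs gs Zpos by simp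
    finally show ?thesis .
  qed
  have iZ2: "(\<Sum>a<d. (sqrt (g a) / Z - sqrt (r a))^2) = 1 / Z^2 - 1"
  proof -
    have "(\<Sum>a<d. (sqrt (g a) / Z - sqrt (r a))^2) = (\<Sum>a<d. g a / Z^2 - 2 * sqrt (g a * r a) / Z + r a)"
      using gpos rpos Zpos by (intro sum.cong refl) (auto simp: power2_eq_square field_simps sg sr less_imp_le simp flip: sgr)
    also have "\<dots> = (\<Sum>a<d. g a) / Z^2 - 2 * Z / Z + (\<Sum>a<d. r a)"
      by (simp add: sum.distrib sum_subtractf sum_divide_distrib sum_distrib_left Z_def)
    also have "\<dots> = 1 / Z^2 - 1" using rs gs Zpos by simp
    finally show ?thesis .
  qed
  have sq4: "(2 - 2 * Z) \<le> D" using DH .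
  have Dlz: "D = 4 * 0 + - 2 * ln Z" using Deq by simp
  have vd_eq: "vd d (ng d P g) g = (\<Sum>a<d. \<bar>sqrt (g a)\<bar> * \<bar>sqrt (r a) / Z - sqrt (g a)\<bar>)"
    unfolding vd_def
  proof (intro sum.cong refl)
    fix a assume "a \<in> {..<d}"
    then have a: "a < d" by simp
    have "ng d P g a - g a = sqrt (g a) * (sqrt (r a) / Z - sqrt (g a))"
      using ng_eq[OF a] sg[OF a] by (simp add: algebra_simps flip: sgr)
    then show "\<bar>ng d P g a - g a\<bar> = \<bar>sqrt (g a)\<bar> * \<bar>sqrt (r a) / Z - sqrt (g a)\<bar>" by (simp add: abs_mult)
  qed
  have "(vd d (ng d P g) g)^2 \<le> (\<Sum>a<d. (sqrt (g a))^2) * (\<Sum>a<d. (sqrt (r a) / Z - sqrt (g a))^2)"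
    unfolding vd_eq by (rule cs_abs)
  also have "(\<Sum>a<d. (sqrt (g a))^2) = 1" using gs gpos by (simp add: less_imp_le)
  finally have v1: "(vd d (ng d P g) g)^2 \<le> 1 / Z^2 - 1" using iZ by simp
  have v0: "0 \<le> vd d (ng d P g) g" unfolding vd_def by (simp add: sum_nonneg)
  have "vd d (ng d P g) g \<le> (\<Sum>a<d. ng d P g a + g a)" unfolding vd_def
    using ngpv gpos unfolding pv_def by (intro sum_mono) (auto simp: abs_le_iff less_imp_le)
  also have "\<dots> = 2" using ngpv gs by (simp add: sum.distrib pv_def)
  finally have v2: "vd d (ng d P g) g \<le> 2" .
  show "(vd d (ng d P g) g)^2 \<le> 4 * D" unfolding Deq by (rule delta_bound[OF v0 v2 v1 Zpos Zle])
  have md_eq: "md d (nP d P g) P = (\<Sum>a<d. \<bar>sqrt (r a)\<bar> * \<bar>sqrt (g a) / Z - sqrt (r a)\<bar>)"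
    unfolding md_def
  proof (intro sum.cong refl)
    fix a assume "a \<in> {..<d}"
    then have a: "a < d" by simp
    define c where "c = sqrt (g a / r a) / Z - 1"
    have "(\<Sum>b<d. \<bar>nP d P g a b - P a b\<bar>) = (\<Sum>b<d. P a b * \<bar>c\<bar>)"
    proof (intro sum.cong refl)
      fix b assume "b \<in> {..<d}"
      then have "0 < P a b" using Ppos a by simp
      moreover have "nP d P g a b - P a b = P a b * c" unfolding c_def nP_eq by (simp add: algebra_simps)
      ultimately show "\<bar>nP d P g a b - P a b\<bar> = P a b * \<bar>c\<bar>" by (simp add: abs_mult)
    qed
    also have "\<dots> = r a * \<bar>c\<bar>" by (simp add: r_def rws_def sum_distrib_right)
    also have "\<dots> = \<bar>r a * c\<bar>" using rpos[OF a] by (simp add: abs_mult)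
    also have "r a * c = sqrt (r a) * (sqrt (g a) / Z - sqrt (r a))"
    proof -
      have sr0: "0 < sqrt (r a)" using rpos[OF a] by simp
      have "r a * c = (sqrt (r a) * sqrt (r a)) * (sqrt (g a) / sqrt (r a) / Z - 1)"
        unfolding c_def using sr[OF a] by (simp add: real_sqrt_divide)
      also have "\<dots> = sqrt (r a) * (sqrt (g a) / Z - sqrt (r a))" using sr0 Zpos by (simp add: field_simps)
      finally show ?thesis .
    qed
    finally show "(\<Sum>b<d. \<bar>nP d P g a b - P a b\<bar>) = \<bar>sqrt (r a)\<bar> * \<bar>sqrt (g a) / Z - sqrt (r a)\<bar>"
      by (simp add: abs_mult)
  qed
  have "(md d (nP d P g) P)^2 \<le> (\<Sum>a<d. (sqrt (r a))^2) * (\<Sum>a<d. (sqrt (g a) / Z - sqrt (r a))^2)"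
    unfolding md_eq by (rule cs_abs)
  also have "(\<Sum>a<d. (sqrt (r a))^2) = 1" using rs rpos by (simp add: less_imp_le)
  finally have m1: "(md d (nP d P g) P)^2 \<le> 1 / Z^2 - 1" using iZ2 by simp
  have m0: "0 \<le> md d (nP d P g) P" unfolding md_def by (simp add: sum_nonneg)
  have "md d (nP d P g) P \<le> (\<Sum>a<d. \<Sum>b<d. nP d P g a b + P a b)" unfolding md_def
    using nPpm Ppos unfolding pm_def by (intro sum_mono) (auto simp: abs_le_iff less_imp_le)
  also have "\<dots> = 2" using nPpm Ps by (simp add: sum.distrib pm_def)
  finally have m2: "md d (nP d P g) P \<le> 2" .
  show "(md d (nP d P g) P)^2 \<le> 4 * D" unfolding Deq by (rule delta_bound[OF m0 m2 m1 Zpos Zle])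
qed

definition tr :: "(nat \<Rightarrow> nat \<Rightarrow> real) \<Rightarrow> nat \<Rightarrow> nat \<Rightarrow> real" where
  "tr P = (\<lambda>a b. P b a)"

definition invG :: "nat \<Rightarrow> mvec \<Rightarrow> bool" where
  "invG d G \<longleftrightarrow> (\<forall>i. pv d (nd G i)) \<and> (\<forall>e. pm d (ed G e))"

definition Phi :: "nat \<Rightarrow> (nat \<times> nat) set \<Rightarrow> nat \<Rightarrow> mvec \<Rightarrow> real" where
  "Phi n E d G = (\<Sum>e\<in>E. klm d (ed G e)) + (\<Sum>i\<in>{1..n}. klv d (nd G i))"

lemma step_i_eq:
  "norm_at d e (fst e) (proj_i d e G) =
    G\<lparr>ed := (ed G)(e := nP d (ed G e) (nd G (fst e))), nd := (nd G)(fst e := ng d (ed G e) (nd G (fst e)))\<rparr>"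
  by (simp add: norm_at_def proj_i_def Let_def nP_def ng_def pP_def pg_def rowsum_def rws_def)

lemma step_j_eq:
  "norm_at d e (snd e) (proj_j d e G) =
    G\<lparr>ed := (ed G)(e := tr (nP d (tr (ed G e)) (nd G (snd e)))), nd := (nd G)(snd e := ng d (tr (ed G e)) (nd G (snd e)))\<rparr>"
proof -
  have "(\<lambda>x y. ed G e x y * sqrt (nd G (snd e) y / colsum d G e y) /
          (\<Sum>a<d. \<Sum>b<d. ed G e a b * sqrt (nd G (snd e) b / colsum d G e b)))
        = tr (nP d (tr (ed G e)) (nd G (snd e)))"
  proof -
    have sw: "(\<Sum>a<d. \<Sum>b<d. ed G e a b * sqrt (nd G (snd e) b / (\<Sum>x<d. ed G e x b)))
       = (\<Sum>a<d. \<Sum>b<d. ed G e b a * sqrt (nd G (snd e) a / (\<Sum>x<d. ed G e x a)))" by (rule sum.swap)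
    show ?thesis unfolding tr_def nP_def pP_def rws_def colsum_def sw by (simp add: fun_eq_iff)
  qed
  then show ?thesis
    by (simp add: norm_at_def proj_j_def Let_def ng_def pg_def rws_def tr_def colsum_def)
qed

lemma pm_tr: "pm d (tr P) = pm d P"
proof -
  have "(\<Sum>a<d. \<Sum>b<d. P b a) = (\<Sum>a<d. \<Sum>b<d. P a b)" by (rule sum.swap)
  then show ?thesis unfolding pm_def tr_def by auto
qed

lemma klm_tr: "klm d (tr P) = klm d P"
  unfolding klm_def tr_def by (rule sum.swap)

lemma md_tr: "md d (tr P) (tr Q) = md d P Q"
  unfolding md_def tr_def by (rule sum.swap)

lemma rws_tr: "rws d (tr (ed G e)) b = colsum d G e b"
  unfolding rws_def tr_def colsum_def by simp

lemma sum_upd: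
  assumes "finite A" "x \<in> A"
  shows "(\<Sum>y\<in>A. h ((f(x := v)) y)) = (\<Sum>y\<in>A. h (f y)) - h (f x) + (h v :: real)"
proof -
  have "(\<Sum>y\<in>A. h ((f(x := v)) y)) = h v + (\<Sum>y\<in>A - {x}. h ((f(x := v)) y))"
    using assms by (simp add: sum.remove)
  also have "(\<Sum>y\<in>A - {x}. h ((f(x := v)) y)) = (\<Sum>y\<in>A - {x}. h (f y))"
    by (intro sum.cong) auto
  also have "(\<Sum>y\<in>A. h (f y)) = h (f x) + (\<Sum>y\<in>A - {x}. h (f y))"
    using assms by (simp add: sum.remove)
  ultimately show ?thesis by simp
qed

lemma Phi_upd:
  assumes "finite E" "e \<in> E" "v \<in> {1..n}"
  shows "Phi n E d (G\<lparr>ed := (ed G)(e := P'), nd := (nd G)(v := g')\<rparr>)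
       = Phi n E d G - klm d (ed G e) + klm d P' - klv d (nd G v) + klv d g'"
  unfolding Phi_def using sum_upd[OF assms(1,2), of "klm d" "ed G" P'] sum_upd[of "{1..n}" v "klv d" "nd G" g'] assms
  by simp

lemma klv_nonneg: assumes "pv d p" shows "0 \<le> klv d p"
proof (cases "d = 0")
  case True then show ?thesis by (simp add: klv_def)
next
  case False
  then have dpos: "0 < real d" by simp
  have "(\<Sum>a<d. (1 - real d * p a) / real d) \<le> klv d p" unfolding klv_def
  proof (intro sum_mono)
    fix a assume "a \<in> {..<d}"
    then have "0 < real d * p a" using assms dpos by (simp add: pv_def)
    then have "ln (real d * p a) \<le> real d * p a - 1" by (rule ln_le_minus_one)
    then show "(1 - real d * p a) / real d \<le> - ln (real d * p a) / real d"
      using divide_right_mono[of "1 - real d * p a" "- ln (real d * p a)" "real d"] dpos by simp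
  qed
  moreover have "(\<Sum>a<d. (1 - real d * p a) / real d) = 0"
    using assms dpos by (simp add: pv_def sum_divide_distrib[symmetric] sum_subtractf sum_distrib_left[symmetric])
  ultimately show ?thesis by simp
qed

lemma klm_nonneg: assumes "pm d P" shows "0 \<le> klm d P"
proof (cases "d = 0")
  case True then show ?thesis by (simp add: klm_def)
next
  case False
  then have dpos: "0 < real d ^ 2" by simp
  have "(\<Sum>a<d. \<Sum>b<d. (1 - real d ^ 2 * P a b) / real d ^ 2) \<le> klm d P" unfolding klm_def
  proof (intro sum_mono)
    fix a b assume "a \<in> {..<d}" "b \<in> {..<d}"
    then have "0 < real d ^ 2 * P a b" using assms dpos by (simp add: pm_def)
    then have "ln (real d ^ 2 * P a b) \<le> real d ^ 2 * P a b - 1" by (rule ln_le_minus_one)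
    then show "(1 - real d ^ 2 * P a b) / real d ^ 2 \<le> - ln (real d ^ 2 * P a b) / real d ^ 2"
      using divide_right_mono[of "1 - real d ^ 2 * P a b" "- ln (real d ^ 2 * P a b)" "real d ^ 2"] dpos by simp
  qed
  moreover have "(\<Sum>a<d. \<Sum>b<d. (1 - real d ^ 2 * P a b) / real d ^ 2) = 0"
  proof -
    have "(\<Sum>a<d. \<Sum>b<d. (1 - real d ^ 2 * P a b) / real d ^ 2) = (\<Sum>a<d. \<Sum>b<d. (1 / real d ^ 2 - P a b))"
      using dpos by (intro sum.cong refl) (simp add: field_simps)
    also have "\<dots> = real d * (real d * (1 / real d ^ 2)) - (\<Sum>a<d. \<Sum>b<d. P a b)"
      by (simp add: sum_subtractf)
    also have "\<dots> = 0" using assms False by (simp add: pm_def power2_eq_square)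
    finally show ?thesis .
  qed
  ultimately show ?thesis by simp
qed

lemma Phi_nonneg: "invG d G \<Longrightarrow> 0 \<le> Phi n E d G"
  unfolding Phi_def invG_def by (intro add_nonneg_nonneg sum_nonneg klv_nonneg klm_nonneg) auto


lemma tr_tr[simp]: "tr (tr P) = P" unfolding tr_def by simp

lemma step_i_props:
  assumes d: "0 < d" and inv: "invG d G" and fin: "finite E" and e: "e \<in> E" and v: "fst e \<in> {1..n}"
  defines "G' \<equiv> norm_at d e (fst e) (proj_i d e G)"
  shows "invG d G'" "0 \<le> Phi n E d G - Phi n E d G'"
    "(viol_i d G e)^2 \<le> 4 * (Phi n E d G - Phi n E d G')"
    "(vd d (nd G' (fst e)) (nd G (fst e)))^2 \<le> 4 * (Phi n E d G - Phi n E d G')"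
    "(md d (ed G' e) (ed G e))^2 \<le> 4 * (Phi n E d G - Phi n E d G')"
    "\<And>i. i \<noteq> fst e \<Longrightarrow> nd G' i = nd G i" "\<And>e'. e' \<noteq> e \<Longrightarrow> ed G' e' = ed G e'"
proof -
  define g where "g = nd G (fst e)"
  define P where "P = ed G e"
  have g: "pv d g" and P: "pm d P" using inv unfolding invG_def g_def P_def by blast+
  have G'eq: "G' = G\<lparr>ed := (ed G)(e := nP d P g), nd := (nd G)(fst e := ng d P g)\<rparr>"
    unfolding G'_def step_i_eq g_def P_def ..
  have Dq: "Phi n E d G - Phi n E d G' = klm d P + klv d g - klm d (nP d P g) - klv d (ng d P g)"
    unfolding G'eq Phi_upd[OF fin e v] by (simp add: g_def P_def)
  note c = core[OF d g P, folded Dq]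
  show "invG d G'" using inv c(1,2) unfolding G'eq invG_def by auto
  show "0 \<le> Phi n E d G - Phi n E d G'" by (rule c(3))
  have "viol_i d G e = (\<Sum>a<d. \<bar>rws d P a - g a\<bar>)"
    by (simp add: viol_i_def rowsum_def rws_def P_def g_def)
  then show "(viol_i d G e)^2 \<le> 4 * (Phi n E d G - Phi n E d G')" using c(4) by simp
  show "(vd d (nd G' (fst e)) (nd G (fst e)))^2 \<le> 4 * (Phi n E d G - Phi n E d G')"
    using c(5) by (simp add: G'eq g_def)
  show "(md d (ed G' e) (ed G e))^2 \<le> 4 * (Phi n E d G - Phi n E d G')"
    using c(6) by (simp add: G'eq P_def)
  show "\<And>i. i \<noteq> fst e \<Longrightarrow> nd G' i = nd G i" "\<And>e'. e' \<noteq> e \<Longrightarrow> ed G' e' = ed G e'"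
    by (auto simp: G'eq)
qed

lemma step_j_props:
  assumes d: "0 < d" and inv: "invG d G" and fin: "finite E" and e: "e \<in> E" and v: "snd e \<in> {1..n}"
  defines "G' \<equiv> norm_at d e (snd e) (proj_j d e G)"
  shows "invG d G'" "0 \<le> Phi n E d G - Phi n E d G'"
    "(viol_j d G e)^2 \<le> 4 * (Phi n E d G - Phi n E d G')"
    "(vd d (nd G' (snd e)) (nd G (snd e)))^2 \<le> 4 * (Phi n E d G - Phi n E d G')"
    "(md d (ed G' e) (ed G e))^2 \<le> 4 * (Phi n E d G - Phi n E d G')"
    "\<And>i. i \<noteq> snd e \<Longrightarrow> nd G' i = nd G i" "\<And>e'. e' \<noteq> e \<Longrightarrow> ed G' e' = ed G e'"
proof -
  define g where "g = nd G (snd e)"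
  define P where "P = tr (ed G e)"
  have g: "pv d g" and P: "pm d P" using inv unfolding invG_def g_def P_def pm_tr by blast+
  have G'eq: "G' = G\<lparr>ed := (ed G)(e := tr (nP d P g)), nd := (nd G)(snd e := ng d P g)\<rparr>"
    unfolding G'_def step_j_eq g_def P_def ..
  have Dq: "Phi n E d G - Phi n E d G' = klm d P + klv d g - klm d (nP d P g) - klv d (ng d P g)"
    unfolding G'eq Phi_upd[OF fin e v] by (simp add: g_def P_def klm_tr)
  note c = core[OF d g P, folded Dq]
  show "invG d G'" using inv c(1,2) unfolding G'eq invG_def by (auto simp: pm_tr)
  show "0 \<le> Phi n E d G - Phi n E d G'" by (rule c(3))
  have "viol_j d G e = (\<Sum>a<d. \<bar>rws d P a - g a\<bar>)"
    by (simp add: viol_j_def rws_tr P_def g_def)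
  then show "(viol_j d G e)^2 \<le> 4 * (Phi n E d G - Phi n E d G')" using c(4) by simp
  show "(vd d (nd G' (snd e)) (nd G (snd e)))^2 \<le> 4 * (Phi n E d G - Phi n E d G')"
    using c(5) by (simp add: G'eq g_def)
  have "md d (ed G' e) (ed G e) = md d (tr (nP d P g)) (tr P)" by (simp add: G'eq P_def)
  also have "\<dots> = md d (nP d P g) P" by (rule md_tr)
  finally show "(md d (ed G' e) (ed G e))^2 \<le> 4 * (Phi n E d G - Phi n E d G')"
    using c(6) by simp
  show "\<And>i. i \<noteq> snd e \<Longrightarrow> nd G' i = nd G i" "\<And>e'. e' \<noteq> e \<Longrightarrow> ed G' e' = ed G e'"
    by (auto simp: G'eq)
qed


lemma node_init:
  fixes v :: "nat \<Rightarrow> real"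
  assumes d: "0 < d"
  defines "Z \<equiv> (\<Sum>a<d. exp (v a))"
  shows "pv d (\<lambda>a. exp (v a) / Z)"
    "klv d (\<lambda>a. exp (v a) / Z) \<le> ln Z - (\<Sum>a<d. v a) / real d"
    "klv d (\<lambda>a. exp (v a) / Z) \<le> Z - (\<Sum>a<d. v a) / real d"
proof -
  have Zpos: "0 < Z" unfolding Z_def using d by (intro sum_pos) auto
  have dpos: "0 < real d" using d by simp
  show "pv d (\<lambda>a. exp (v a) / Z)" unfolding pv_def using Zpos
    by (simp add: sum_divide_distrib[symmetric] Z_def)
  have "klv d (\<lambda>a. exp (v a) / Z) = (\<Sum>a<d. (ln Z - ln (real d) - v a) / real d)"
    unfolding klv_def
  proof (intro sum.cong refl)
    fix a
    have "ln (real d * (exp (v a) / Z)) = ln (real d) + v a - ln Z"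
      using dpos Zpos by (simp add: ln_mult_pos ln_divide_pos)
    then show "- ln (real d * (exp (v a) / Z)) / real d = (ln Z - ln (real d) - v a) / real d" by simp
  qed
  also have "\<dots> = (real d * (ln Z - ln (real d)) - (\<Sum>a<d. v a)) / real d"
    by (simp add: sum_divide_distrib[symmetric] sum_subtractf)
  also have "\<dots> = ln Z - ln (real d) - (\<Sum>a<d. v a) / real d"
    using dpos by (simp add: field_simps)
  finally have k: "klv d (\<lambda>a. exp (v a) / Z) = ln Z - ln (real d) - (\<Sum>a<d. v a) / real d" .
  have ld: "0 \<le> ln (real d)" using d by simp
  show "klv d (\<lambda>a. exp (v a) / Z) \<le> ln Z - (\<Sum>a<d. v a) / real d" using k ld by simp
  have "ln Z \<le> Z - 1" using Zpos by (rule ln_le_minus_one)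
  then show "klv d (\<lambda>a. exp (v a) / Z) \<le> Z - (\<Sum>a<d. v a) / real d" using k ld by simp
qed

lemma edge_init:
  fixes v :: "nat \<Rightarrow> nat \<Rightarrow> real"
  assumes d: "0 < d"
  defines "Z \<equiv> (\<Sum>a<d. \<Sum>b<d. exp (v a b))"
  shows "pm d (\<lambda>a b. exp (v a b) / Z)"
    "klm d (\<lambda>a b. exp (v a b) / Z) \<le> ln Z - (\<Sum>a<d. \<Sum>b<d. v a b) / real d ^ 2"
    "klm d (\<lambda>a b. exp (v a b) / Z) \<le> Z - (\<Sum>a<d. \<Sum>b<d. v a b) / real d"
proof -
  define V where "V = (\<Sum>a<d. \<Sum>b<d. v a b)"
  have Zpos: "0 < Z" unfolding Z_def using d by (intro sum_pos) auto
  have dpos: "0 < real d" using d by simp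
  have d2pos: "0 < real d ^ 2" using d by simp
  show "pm d (\<lambda>a b. exp (v a b) / Z)" unfolding pm_def using Zpos
    by (simp add: sum_divide_distrib[symmetric] Z_def)
  have ld2: "ln (real d ^ 2) = 2 * ln (real d)" using dpos by (simp add: ln_realpow)
  have "klm d (\<lambda>a b. exp (v a b) / Z) = (\<Sum>a<d. \<Sum>b<d. (ln Z - 2 * ln (real d) - v a b) / real d ^ 2)"
    unfolding klm_def
  proof (intro sum.cong refl)
    fix a b
    have "ln (real d ^ 2 * (exp (v a b) / Z)) = 2 * ln (real d) + v a b - ln Z"
      using d2pos Zpos ld2 by (simp add: ln_mult_pos ln_divide_pos)
    then show "- ln (real d ^ 2 * (exp (v a b) / Z)) / real d ^ 2 = (ln Z - 2 * ln (real d) - v a b) / real d ^ 2" by simp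
  qed
  also have "\<dots> = (\<Sum>a<d. \<Sum>b<d. (ln Z - 2 * ln (real d)) / real d ^ 2) - V / real d ^ 2"
    unfolding V_def by (simp add: sum_divide_distrib[symmetric] sum_subtractf diff_divide_distrib)
  also have "(\<Sum>a<d. \<Sum>b<d. (ln Z - 2 * ln (real d)) / real d ^ 2) = ln Z - 2 * ln (real d)"
    using dpos by (simp add: power2_eq_square)
  finally have k: "klm d (\<lambda>a b. exp (v a b) / Z) = ln Z - 2 * ln (real d) - V / real d ^ 2" .
  have ld: "0 \<le> ln (real d)" using d by simp
  show "klm d (\<lambda>a b. exp (v a b) / Z) \<le> ln Z - (\<Sum>a<d. \<Sum>b<d. v a b) / real d ^ 2"
    using k ld unfolding V_def by simp
  have lnZ: "ln Z \<le> Z - 1" using Zpos by (rule ln_le_minus_one)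
  show "klm d (\<lambda>a b. exp (v a b) / Z) \<le> Z - (\<Sum>a<d. \<Sum>b<d. v a b) / real d"
    unfolding V_def[symmetric] k
  proof (cases "V \<le> 0")
    case True
    have "- V / real d ^ 2 \<le> - V / real d"
      using True d by (intro divide_left_mono) (auto simp: power2_eq_square)
    then show "ln Z - 2 * ln (real d) - V / real d ^ 2 \<le> Z - V / real d" using lnZ ld by simp
  next
    case False
    define m where "m = - V / real d ^ 2"
    have m0: "m < 0" unfolding m_def using False d2pos by (simp add: divide_neg_pos)
    have Vm: "V = - (real d ^ 2 * m)" unfolding m_def using d2pos by simp
    define W where "W = real d ^ 2 * exp (- m)"
    have "(\<Sum>a<d. \<Sum>b<d. exp (- m) * (1 + (v a b + m))) \<le> Z" unfolding Z_def
    proof (intro sum_mono)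
      fix a b
      have "exp (- m) * (1 + (v a b + m)) \<le> exp (- m) * exp (v a b + m)"
        by (intro mult_left_mono exp_ge_add_one_self) auto
      also have "\<dots> = exp (v a b)" by (simp add: exp_add[symmetric])
      finally show "exp (- m) * (1 + (v a b + m)) \<le> exp (v a b)" .
    qed
    moreover have "(\<Sum>a<d. \<Sum>b<d. exp (- m) * (1 + (v a b + m))) = exp (- m) * (real d ^ 2 + V + real d ^ 2 * m)"
      unfolding V_def by (simp add: sum_distrib_left[symmetric] sum.distrib power2_eq_square algebra_simps)
    ultimately have ZW: "W \<le> Z" unfolding W_def using Vm by (simp add: mult.commute)
    have em: "1 \<le> exp (- m)" using m0 by simp
    have d1: "1 \<le> real d ^ 2" using d by simp
    have W1: "1 \<le> W" unfolding W_def using em d1 by (metis mult_mono' one_le_power mult_1 zero_le_one)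
    have lnW: "ln W = 2 * ln (real d) - m" unfolding W_def using d2pos ld2 by (simp add: ln_mult_pos)
    have "ln Z - ln W \<le> Z - W"
    proof -
      have Wpos: "0 < W" using W1 by simp
      have "ln Z - ln W = ln (Z / W)" using Zpos Wpos by (simp add: ln_divide_pos)
      also have "\<dots> \<le> Z / W - 1" using Zpos Wpos by (intro ln_le_minus_one) simp
      also have "\<dots> = (Z - W) / W" using Wpos by (simp add: field_simps)
      also have "\<dots> \<le> Z - W" using W1 ZW by (simp add: divide_le_eq mult_le_cancel_left1 mult_le_cancel_left_pos)
      finally show ?thesis .
    qed
    moreover have "- (real d * m) \<le> W"
    proof -
      have "- m < exp (- m)" using exp_ge_add_one_self[of "- m"] by simp
      also have "\<dots> \<le> real d * exp (- m)" using d by simp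
      finally have "- m \<le> real d * exp (- m)" by simp
      then have "real d * (- m) \<le> real d * (real d * exp (- m))" using dpos by (intro mult_left_mono) auto
      then show ?thesis unfolding W_def by (simp add: power2_eq_square algebra_simps)
    qed
    moreover have "V / real d = - (real d * m)" unfolding Vm using dpos by (simp add: power2_eq_square)
    moreover have "V / real d ^ 2 = - m" unfolding Vm using dpos by simp
    ultimately show "ln Z - 2 * ln (real d) - V / real d ^ 2 \<le> Z - V / real d" using lnW by simp
  qed
qed


lemma init_nd: "nd (emp_init d \<eta> C) i = (\<lambda>a. exp (- \<eta> * nd C i a) / (\<Sum>a<d. exp (- \<eta> * nd C i a)))"
  by (simp add: emp_init_def)
lemma init_ed: "ed (emp_init d \<eta> C) e = (\<lambda>a b. exp (- \<eta> * ed C e a b) / (\<Sum>a<d. \<Sum>b<d. exp (- \<eta> * ed C e a b)))"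
  by (simp add: emp_init_def)

lemma inv_init: "0 < d \<Longrightarrow> invG d (emp_init d \<eta> C)"
  unfolding invG_def init_nd init_ed
  using node_init(1)[of d "\<lambda>a. - \<eta> * nd C _ a"] edge_init(1)[of d "\<lambda>a b. - \<eta> * ed C _ a b"] by blast

lemma Phi_init:
  assumes d: "0 < d" and fin: "finite E"
  shows "Phi n E d (emp_init d \<eta> C) \<le> S0 n E d \<eta> C"
proof -
  have dpos: "0 < real d" using d by simp
  have kmS: "klm d (ed (emp_init d \<eta> C) e) \<le> ln (\<Sum>x<d. \<Sum>y<d. exp (- \<eta> * ed C e x y))
              + (\<Sum>x<d. \<Sum>y<d. \<eta> / (real d)^2 * ed C e x y)" for e
  proof -
    have "(\<Sum>x<d. \<Sum>y<d. \<eta> / (real d)^2 * ed C e x y) = - (\<Sum>x<d. \<Sum>y<d. - \<eta> * ed C e x y) / real d ^ 2"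
      by (simp add: sum_negf sum_divide_distrib)
    then show ?thesis unfolding init_ed using edge_init(2)[OF d, of "\<lambda>a b. - \<eta> * ed C e a b"] by simp
  qed
  have kmL: "klm d (ed (emp_init d \<eta> C) e) \<le> (\<Sum>x<d. \<Sum>y<d. \<bar>\<eta> * ed C e x y / real d + exp (- \<eta> * ed C e x y)\<bar>)" for e
  proof -
    have "(\<Sum>x<d. \<Sum>y<d. exp (- \<eta> * ed C e x y)) - (\<Sum>x<d. \<Sum>y<d. - \<eta> * ed C e x y) / real d
        = (\<Sum>x<d. \<Sum>y<d. \<eta> * ed C e x y / real d + exp (- \<eta> * ed C e x y))"
      by (simp add: sum_negf sum_divide_distrib sum.distrib)
    also have "\<dots> \<le> (\<Sum>x<d. \<Sum>y<d. \<bar>\<eta> * ed C e x y / real d + exp (- \<eta> * ed C e x y)\<bar>)"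
      by (intro sum_mono) simp
    finally show ?thesis unfolding init_ed using edge_init(3)[OF d, of "\<lambda>a b. - \<eta> * ed C e a b"] by simp
  qed
  have kvS: "klv d (nd (emp_init d \<eta> C) i) \<le> ln (\<Sum>x<d. exp (- \<eta> * nd C i x)) + (\<Sum>x<d. \<eta> / real d * nd C i x)" for i
  proof -
    have "(\<Sum>x<d. \<eta> / real d * nd C i x) = - (\<Sum>x<d. - \<eta> * nd C i x) / real d"
      by (simp add: sum_negf sum_divide_distrib)
    then show ?thesis unfolding init_nd using node_init(2)[OF d, of "\<lambda>a. - \<eta> * nd C i a"] by simp
  qed
  have kvL: "klv d (nd (emp_init d \<eta> C) i) \<le> (\<Sum>x<d. \<bar>\<eta> * nd C i x / real d + exp (- \<eta> * nd C i x)\<bar>)" for i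
  proof -
    have "(\<Sum>x<d. exp (- \<eta> * nd C i x)) - (\<Sum>x<d. - \<eta> * nd C i x) / real d
        = (\<Sum>x<d. \<eta> * nd C i x / real d + exp (- \<eta> * nd C i x))"
      by (simp add: sum_negf sum_divide_distrib sum.distrib)
    also have "\<dots> \<le> (\<Sum>x<d. \<bar>\<eta> * nd C i x / real d + exp (- \<eta> * nd C i x)\<bar>)"
      by (intro sum_mono) simp
    finally show ?thesis unfolding init_nd using node_init(3)[OF d, of "\<lambda>a. - \<eta> * nd C i a"] by simp
  qed
  have "Phi n E d (emp_init d \<eta> C) \<le> S_val n E d \<eta> C"
    unfolding Phi_def S_val_def by (intro add_mono sum_mono kmS kvS)
  moreover have "Phi n E d (emp_init d \<eta> C) \<le> L1_term n E d \<eta> C"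
    unfolding Phi_def L1_term_def by (intro add_mono sum_mono kmL kvL)
  ultimately show ?thesis unfolding S0_def by simp
qed


definition gok :: "nat \<Rightarrow> (nat \<times> nat) set \<Rightarrow> bool" where
  "gok n E \<longleftrightarrow> finite E \<and> (\<forall>e\<in>E. fst e \<in> {1..n} \<and> snd e \<in> {1..n} \<and> fst e \<noteq> snd e)"

lemma gok_of_graph: "graph_ok n E \<Longrightarrow> gok n E"
proof -
  assume a: "graph_ok n E"
  then have "E \<subseteq> {1..n} \<times> {1..n}" by (simp add: graph_ok_def)
  then have "finite E" by (rule finite_subset) simp
  then show "gok n E" using a unfolding graph_ok_def gok_def by fastforce
qed

lemma sq_sqrt: "0 \<le> (x::real) \<Longrightarrow> x^2 \<le> 4 * D \<Longrightarrow> x \<le> 2 * sqrt D"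
proof -
  assume "0 \<le> x" "x^2 \<le> 4 * D"
  then have "x \<le> sqrt (4 * D)" by (intro real_le_rsqrt)
  also have "\<dots> = 2 * sqrt D" by (simp add: real_sqrt_mult)
  finally show ?thesis .
qed

lemma sqrt_comb:
  fixes k x y :: real
  assumes "0 \<le> k" "0 \<le> x" "0 \<le> y"
  shows "sqrt (k * y) + sqrt x \<le> sqrt ((k + 1) * (y + x))"
proof (rule real_le_rsqrt)
  have "sqrt ((k * x) * y) \<le> (k * x + y) / 2" using assms by (intro arith_geo_mean_sqrt) auto
  moreover have "(sqrt (k * y) + sqrt x)^2 = k * y + x + 2 * sqrt ((k * x) * y)"
    using assms by (simp add: power2_eq_square algebra_simps real_sqrt_mult)
  ultimately show "(sqrt (k * y) + sqrt x)^2 \<le> (k + 1) * (y + x)" by (simp add: algebra_simps)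
qed

lemma vd_tri: "vd d p r \<le> vd d p q + vd d q r"
  unfolding vd_def sum.distrib[symmetric] by (intro sum_mono) simp

lemma vd_sym: "vd d p q = vd d q p"
  unfolding vd_def by (simp add: abs_minus_commute)

lemma vd_nonneg: "0 \<le> vd d p q" unfolding vd_def by (simp add: sum_nonneg)

lemma col_md: "(\<Sum>b<d. \<bar>colsum d G e b - colsum d H e b\<bar>) \<le> md d (ed H e) (ed G e)"
proof -
  have "(\<Sum>b<d. \<bar>colsum d G e b - colsum d H e b\<bar>) \<le> (\<Sum>b<d. \<Sum>a<d. \<bar>ed H e a b - ed G e a b\<bar>)"
  proof (intro sum_mono)
    fix b
    have "\<bar>colsum d G e b - colsum d H e b\<bar> = \<bar>\<Sum>a<d. ed H e a b - ed G e a b\<bar>"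
      unfolding colsum_def sum_subtractf by (simp add: abs_minus_commute)
    also have "\<dots> \<le> (\<Sum>a<d. \<bar>ed H e a b - ed G e a b\<bar>)" by (rule sum_abs)
    finally show "\<bar>colsum d G e b - colsum d H e b\<bar> \<le> (\<Sum>a<d. \<bar>ed H e a b - ed G e a b\<bar>)" .
  qed
  also have "\<dots> = md d (ed H e) (ed G e)" unfolding md_def by (rule sum.swap)
  finally show ?thesis .
qed

lemma greedy_step:
  assumes d: "0 < d" and g: "gok n E" and inv: "invG d G" and e: "e \<in> E"
  shows "invG d (greedy_update d e G)"
    "(viol d G e)^2 \<le> 4 * (Phi n E d G - Phi n E d (greedy_update d e G))"
proof -
  have fin: "finite E" and v1: "fst e \<in> {1..n}" and v2: "snd e \<in> {1..n}" using g e by (auto simp: gok_def)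
  note si = step_i_props[OF d inv fin e v1] and sj = step_j_props[OF d inv fin e v2]
  show "invG d (greedy_update d e G)" unfolding greedy_update_def using si(1) sj(1) by simp
  show "(viol d G e)^2 \<le> 4 * (Phi n E d G - Phi n E d (greedy_update d e G))"
  proof (cases "viol_i d G e > viol_j d G e")
    case True
    then show ?thesis unfolding greedy_update_def viol_def using si(3) by simp
  next
    case False
    then show ?thesis unfolding greedy_update_def viol_def using sj(3) by (simp add: max_def)
  qed
qed

definition inc :: "nat \<Rightarrow> nat \<times> nat \<Rightarrow> bool" where
  "inc v e \<longleftrightarrow> fst e = v \<or> snd e = v"

lemma edge_step_props:
  assumes d: "0 < d" and g: "gok n E" and inv: "invG d G" and f: "f \<in> E"
  defines "H \<equiv> norm_at d f (fst f) (proj_i d f G)"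
  shows "invG d (edge_step d f G)" "Phi n E d (edge_step d f G) \<le> Phi n E d G"
    "\<And>e. e \<noteq> f \<Longrightarrow> ed (edge_step d f G) e = ed G e"
    "\<And>v. \<not> inc v f \<Longrightarrow> nd (edge_step d f G) v = nd G v"
    "\<And>v. inc v f \<Longrightarrow> vd d (nd (edge_step d f G) v) (nd G v) \<le> 2 * sqrt (Phi n E d G - Phi n E d (edge_step d f G))"
    "invG d H" "Phi n E d H \<le> Phi n E d G" "Phi n E d (edge_step d f G) \<le> Phi n E d H"
    "viol_i d G f \<le> 2 * sqrt (Phi n E d G - Phi n E d H)"
    "md d (ed H f) (ed G f) \<le> 2 * sqrt (Phi n E d G - Phi n E d H)"
    "viol_j d H f \<le> 2 * sqrt (Phi n E d H - Phi n E d (edge_step d f G))"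
    "nd H (snd f) = nd G (snd f)"
    "edge_step d f G = norm_at d f (snd f) (proj_j d f H)"
proof -
  have fin: "finite E" and v1: "fst f \<in> {1..n}" and v2: "snd f \<in> {1..n}" and ne: "fst f \<noteq> snd f"
    using g f by (auto simp: gok_def)
  note si = step_i_props[OF d inv fin f v1, folded H_def]
  have invH: "invG d H" by (rule si(1))
  note sj = step_j_props[OF d invH fin f v2]
  have es: "edge_step d f G = norm_at d f (snd f) (proj_j d f H)" unfolding edge_step_def H_def ..
  show "edge_step d f G = norm_at d f (snd f) (proj_j d f H)" by (rule es)
  show "invG d H" by (rule invH)
  show "invG d (edge_step d f G)" unfolding es by (rule sj(1))
  show PH: "Phi n E d H \<le> Phi n E d G" using si(2) by simp
  show PG: "Phi n E d (edge_step d f G) \<le> Phi n E d H" unfolding es using sj(2) by simp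
  then show "Phi n E d (edge_step d f G) \<le> Phi n E d G" using PH by simp
  show "\<And>e. e \<noteq> f \<Longrightarrow> ed (edge_step d f G) e = ed G e" unfolding es using si(7) sj(7) by simp
  show "\<And>v. \<not> inc v f \<Longrightarrow> nd (edge_step d f G) v = nd G v" unfolding es inc_def using si(6) sj(6) by auto
  show ndH: "nd H (snd f) = nd G (snd f)" using si(6) ne by metis
  have vi0: "0 \<le> viol_i d G f" unfolding viol_i_def by (simp add: sum_nonneg)
  show "viol_i d G f \<le> 2 * sqrt (Phi n E d G - Phi n E d H)" by (rule sq_sqrt[OF vi0 si(3)])
  have m0: "0 \<le> md d (ed H f) (ed G f)" unfolding md_def by (simp add: sum_nonneg)
  show "md d (ed H f) (ed G f) \<le> 2 * sqrt (Phi n E d G - Phi n E d H)" by (rule sq_sqrt[OF m0 si(5)])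
  have vj0: "0 \<le> viol_j d H f" unfolding viol_j_def by (simp add: sum_nonneg)
  show "viol_j d H f \<le> 2 * sqrt (Phi n E d H - Phi n E d (edge_step d f G))" unfolding es by (rule sq_sqrt[OF vj0 sj(3)])
  show "vd d (nd (edge_step d f G) v) (nd G v) \<le> 2 * sqrt (Phi n E d G - Phi n E d (edge_step d f G))"
    if "inc v f" for v
  proof (cases "v = fst f")
    case True
    have "nd (edge_step d f G) v = nd H v" unfolding es using sj(6) True ne by metis
    then have "vd d (nd (edge_step d f G) v) (nd G v) \<le> 2 * sqrt (Phi n E d G - Phi n E d H)"
      using sq_sqrt[OF vd_nonneg si(4)] True by simp
    also have "\<dots> \<le> 2 * sqrt (Phi n E d G - Phi n E d (edge_step d f G))" using PG by simp
    finally show ?thesis .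
  next
    case False
    then have vs: "v = snd f" using that by (simp add: inc_def)
    have "vd d (nd (edge_step d f G) v) (nd G v) = vd d (nd (edge_step d f G) (snd f)) (nd H (snd f))"
      using vs ndH by simp
    also have "\<dots> \<le> 2 * sqrt (Phi n E d H - Phi n E d (edge_step d f G))"
      unfolding es by (rule sq_sqrt[OF vd_nonneg sj(4)])
    also have "\<dots> \<le> 2 * sqrt (Phi n E d G - Phi n E d (edge_step d f G))" using PH by simp
    finally show ?thesis .
  qed
qed


lemma fold_props:
  assumes d: "0 < d" and g: "gok n E"
  shows "set L \<subseteq> E \<Longrightarrow> invG d G \<Longrightarrow> invG d (fold (edge_step d) L G)
    \<and> Phi n E d (fold (edge_step d) L G) \<le> Phi n E d G
    \<and> (\<forall>e. e \<notin> set L \<longrightarrow> ed (fold (edge_step d) L G) e = ed G e)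
    \<and> vd d (nd (fold (edge_step d) L G) v) (nd G v)
        \<le> 2 * sqrt (real (length (filter (inc v) L)) * (Phi n E d G - Phi n E d (fold (edge_step d) L G)))"
proof (induction L arbitrary: G)
  case Nil
  then show ?case by (simp add: vd_def)
next
  case (Cons f L)
  have f: "f \<in> E" and LE: "set L \<subseteq> E" using Cons.prems by auto
  define G1 where "G1 = edge_step d f G"
  note es = edge_step_props[OF d g Cons.prems(2) f, folded G1_def]
  define F where "F = fold (edge_step d) L G1"
  have Feq: "fold (edge_step d) (f # L) G = F" by (simp add: F_def G1_def)
  note IH = Cons.IH[OF LE es(1), folded F_def]
  define k where "k = real (length (filter (inc v) L))"
  have k0: "0 \<le> k" unfolding k_def by simp
  have D1: "0 \<le> Phi n E d G - Phi n E d G1" using es(2) by simp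
  have D2: "0 \<le> Phi n E d G1 - Phi n E d F" using IH by simp
  have tri: "vd d (nd F v) (nd G v) \<le> vd d (nd F v) (nd G1 v) + vd d (nd G1 v) (nd G v)" by (rule vd_tri)
  have vdF: "vd d (nd F v) (nd G1 v) \<le> 2 * sqrt (k * (Phi n E d G1 - Phi n E d F))" using IH k_def by simp
  have last: "vd d (nd F v) (nd G v) \<le> 2 * sqrt (real (length (filter (inc v) (f # L))) * (Phi n E d G - Phi n E d F))"
  proof (cases "inc v f")
    case True
    have "vd d (nd F v) (nd G v) \<le> 2 * sqrt (k * (Phi n E d G1 - Phi n E d F)) + 2 * sqrt (Phi n E d G - Phi n E d G1)"
      using tri vdF es(5)[OF True] by simp
    also have "\<dots> = 2 * (sqrt (k * (Phi n E d G1 - Phi n E d F)) + sqrt (Phi n E d G - Phi n E d G1))" by simp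
    also have "\<dots> \<le> 2 * sqrt ((k + 1) * ((Phi n E d G1 - Phi n E d F) + (Phi n E d G - Phi n E d G1)))"
      using sqrt_comb[OF k0 D1 D2] by simp
    also have "\<dots> = 2 * sqrt (real (length (filter (inc v) (f # L))) * (Phi n E d G - Phi n E d F))"
      using True by (simp add: k_def algebra_simps)
    finally show ?thesis .
  next
    case False
    have "vd d (nd F v) (nd G v) \<le> 2 * sqrt (k * (Phi n E d G1 - Phi n E d F))"
      using tri vdF es(4)[OF False] by (simp add: vd_def)
    also have "\<dots> \<le> 2 * sqrt (k * (Phi n E d G - Phi n E d F))"
      using D1 k0 by (simp add: mult_left_mono)
    also have "\<dots> = 2 * sqrt (real (length (filter (inc v) (f # L))) * (Phi n E d G - Phi n E d F))"
      using False by (simp add: k_def)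
    finally show ?thesis .
  qed
  show ?case unfolding Feq using IH es last by auto
qed

lemma pass:
  assumes d: "0 < d" and g: "gok n E" and inv: "invG d G" and dist: "distinct order" and so: "set order = E"
    and ns: "\<not> stop_crit d E \<epsilon> G" and eps: "0 < \<epsilon>"
    and K: "\<And>v. v \<in> {1..n} \<Longrightarrow> card {f \<in> E. inc v f} \<le> K"
  shows "invG d (cyclic_step d order G)"
    "\<epsilon>^2 \<le> 4 * (real K + 1) * (Phi n E d G - Phi n E d (cyclic_step d order G))"
proof -
  have fin: "finite E" using g by (simp add: gok_def)
  obtain e where e: "e \<in> E" and ve: "\<epsilon> \<le> viol_i d G e \<or> \<epsilon> \<le> viol_j d G e"
    using ns unfolding stop_crit_def by (auto simp: not_less)
  have v1: "fst e \<in> {1..n}" and v2: "snd e \<in> {1..n}" and ne: "fst e \<noteq> snd e" using g e by (auto simp: gok_def)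
  obtain L1 L2 where ord: "order = L1 @ e # L2" using e so by (metis split_list)
  have eL1: "e \<notin> set L1" and dL1: "distinct L1" using dist ord by auto
  have L1E: "set L1 \<subseteq> E" and L2E: "set L2 \<subseteq> E" using so ord by auto
  define GA where "GA = fold (edge_step d) L1 G"
  define GB where "GB = edge_step d e GA"
  define G' where "G' = fold (edge_step d) L2 GB"
  have cyc: "cyclic_step d order G = G'" unfolding cyclic_step_def ord G'_def GB_def GA_def by simp
  have kb: "real (length (filter (inc v) L1)) + 1 \<le> real K" if v: "v \<in> {1..n}" and ie: "inc v e" for v
  proof -
    have "length (filter (inc v) L1) = card (set (filter (inc v) L1))" using dL1 by (metis distinct_card distinct_filter)
    moreover have "card (insert e (set (filter (inc v) L1))) = card (set (filter (inc v) L1)) + 1"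
      using eL1 by simp
    moreover have "card (insert e (set (filter (inc v) L1))) \<le> card {f \<in> E. inc v f}"
      using fin L1E e ie by (intro card_mono) auto
    ultimately have "length (filter (inc v) L1) + 1 \<le> K" using K[OF v] by simp
    then show ?thesis by (metis of_nat_1 of_nat_add of_nat_le_iff)
  qed
  note FA = fold_props[OF d g L1E inv]
  have invA: "invG d GA" using FA GA_def by simp
  note ES = edge_step_props[OF d g invA e, folded GB_def]
  define H where "H = norm_at d e (fst e) (proj_i d e GA)"
  note ES = ES[folded H_def]
  note FB = fold_props[OF d g L2E ES(1), folded G'_def]
  show "invG d (cyclic_step d order G)" unfolding cyc using FB by simp
  have PB: "Phi n E d G' \<le> Phi n E d GB" using FB by simp
  have edA: "ed GA e = ed G e" using FA eL1 unfolding GA_def by blast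
  define DA where "DA = Phi n E d G - Phi n E d GA"
  define D1 where "D1 = Phi n E d GA - Phi n E d H"
  define D2 where "D2 = Phi n E d H - Phi n E d GB"
  have DA0: "0 \<le> DA" and D10: "0 \<le> D1" and D20: "0 \<le> D2"
    using FA ES(7,8) unfolding DA_def D1_def D2_def GA_def by auto
  have Dtot: "DA + D1 + D2 \<le> Phi n E d G - Phi n E d G'" using PB unfolding DA_def D1_def D2_def by simp
  have "\<epsilon> \<le> 2 * sqrt ((real K + 1) * (Phi n E d G - Phi n E d G'))"
  proof (cases "\<epsilon> \<le> viol_i d G e")
    case True
    define v where "v = fst e"
    define k where "k = real (length (filter (inc v) L1))"
    have k0: "0 \<le> k" unfolding k_def by simp
    have kK: "k + 1 \<le> real K" unfolding k_def using kb v1 by (simp add: v_def inc_def)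
    have vdA: "vd d (nd GA v) (nd G v) \<le> 2 * sqrt (k * DA)" using FA unfolding k_def DA_def GA_def by simp
    have "viol_i d G e \<le> viol_i d GA e + vd d (nd GA v) (nd G v)"
      unfolding viol_i_def vd_def v_def sum.distrib[symmetric] rowsum_def edA by (intro sum_mono) simp
    also have "\<dots> \<le> 2 * sqrt D1 + 2 * sqrt (k * DA)" using ES(9) vdA unfolding D1_def by simp
    also have "\<dots> = 2 * (sqrt (k * DA) + sqrt D1)" by simp
    also have "\<dots> \<le> 2 * sqrt ((k + 1) * (DA + D1))" using sqrt_comb[OF k0 D10 DA0] by simp
    also have "\<dots> \<le> 2 * sqrt ((real K + 1) * (Phi n E d G - Phi n E d G'))"
      using kK Dtot DA0 D10 D20 by (simp add: mult_mono)
    finally show ?thesis using True by simp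
  next
    case False
    then have vj: "\<epsilon> \<le> viol_j d G e" using ve by simp
    define v where "v = snd e"
    define k where "k = real (length (filter (inc v) L1))"
    have k0: "0 \<le> k" unfolding k_def by simp
    have kK: "k + 1 \<le> real K" unfolding k_def using kb v2 by (simp add: v_def inc_def)
    have vdA: "vd d (nd GA v) (nd G v) \<le> 2 * sqrt (k * DA)" using FA unfolding k_def DA_def GA_def by simp
    have ndH: "nd H v = nd GA v" using ES(12) v_def by simp
    have colA: "colsum d GA e = colsum d G e" unfolding colsum_def edA ..
    have "viol_j d G e \<le> viol_j d H e + (\<Sum>b<d. \<bar>colsum d GA e b - colsum d H e b\<bar>) + vd d (nd GA v) (nd G v)"
      unfolding viol_j_def vd_def v_def sum.distrib[symmetric] colA[symmetric] ndH[unfolded v_def]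
      by (intro sum_mono) simp
    also have "\<dots> \<le> 2 * sqrt D2 + 2 * sqrt D1 + 2 * sqrt (k * DA)"
      using ES(11) ES(10) col_md[of d GA e H] vdA unfolding D1_def D2_def by simp
    also have "\<dots> = 2 * ((sqrt (k * DA) + sqrt D1) + sqrt D2)" by simp
    also have "\<dots> \<le> 2 * (sqrt ((k + 1) * (DA + D1)) + sqrt D2)" using sqrt_comb[OF k0 D10 DA0] by simp
    also have "\<dots> \<le> 2 * sqrt ((k + 1 + 1) * ((DA + D1) + D2))"
      using sqrt_comb[of "k + 1" D2 "DA + D1"] k0 D20 DA0 D10 by simp
    also have "\<dots> \<le> 2 * sqrt ((real K + 1) * (Phi n E d G - Phi n E d G'))"
      using kK Dtot DA0 D10 D20 by (simp add: mult_mono)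
    finally show ?thesis using vj by simp
  qed
  then have "\<epsilon>^2 \<le> (2 * sqrt ((real K + 1) * (Phi n E d G - Phi n E d G')))^2"
    using eps by (intro power_mono) auto
  also have "\<dots> = 4 * ((real K + 1) * (Phi n E d G - Phi n E d G'))"
    using Dtot DA0 D10 D20 by (simp add: power_mult_distrib)
  finally show "\<epsilon>^2 \<le> 4 * (real K + 1) * (Phi n E d G - Phi n E d (cyclic_step d order G))"
    unfolding cyc by (simp only: mult.assoc)
qed


lemma descent:
  fixes \<Phi> :: "nat \<Rightarrow> real" and I stp :: "nat \<Rightarrow> bool"
  assumes c: "0 < c" and I0: "I 0" and P0: "\<Phi> 0 \<le> S"
    and nn: "\<And>t. I t \<Longrightarrow> 0 \<le> \<Phi> t"
    and st: "\<And>t. I t \<Longrightarrow> \<not> stp t \<Longrightarrow> I (Suc t) \<and> \<Phi> (Suc t) \<le> \<Phi> t - c"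
  shows "\<exists>t \<le> nat \<lceil>S / c\<rceil>. stp t"
proof (rule ccontr)
  define N where "N = nat \<lceil>S / c\<rceil>"
  assume "\<not> (\<exists>t \<le> nat \<lceil>S / c\<rceil>. stp t)"
  then have ns: "\<And>t. t \<le> N \<Longrightarrow> \<not> stp t" unfolding N_def by auto
  have "t \<le> N + 1 \<Longrightarrow> I t \<and> \<Phi> t \<le> S - real t * c" for t
  proof (induction t)
    case 0 then show ?case using I0 P0 by simp
  next
    case (Suc t)
    then have "I t \<and> \<Phi> t \<le> S - real t * c" by simp
    moreover have "\<not> stp t" using Suc.prems ns by simp
    ultimately have h1: "I t" and h2: "\<Phi> t \<le> S - real t * c" and h3: "\<not> stp t" by auto
    have "I (Suc t)" and h4: "\<Phi> (Suc t) \<le> \<Phi> t - c" using st[OF h1 h3] by auto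
    moreover have "\<Phi> (Suc t) \<le> S - real (Suc t) * c" using h2 h4 by (simp add: algebra_simps)
    ultimately show ?case by simp
  qed
  then have "I (N + 1) \<and> \<Phi> (N + 1) \<le> S - real (N + 1) * c" by blast
  then have "I (N + 1)" and le: "\<Phi> (N + 1) \<le> S - real (N + 1) * c" by auto
  then have "0 \<le> S - real (N + 1) * c" using nn by (meson order_trans)
  moreover have "S / c \<le> real N" unfolding N_def by linarith
  then have "S \<le> real N * c" using c by (simp add: divide_le_eq)
  ultimately show False using c by (simp add: algebra_simps)
qed

lemma deg_bound:
  assumes "finite E" "v \<in> {1..n}"
  shows "card {f \<in> E. inc v f} \<le> max_deg n E"
  unfolding max_deg_def inc_def using assms by (intro Max_ge) auto

theorem theorem2:
  fixes n d :: nat and E :: "(nat \<times> nat) set" and C :: mvec and \<eta> \<epsilon> :: real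
  assumes "graph_ok n E" and "\<eta> > 0" and "\<epsilon> > 0"
  shows "(\<forall>order. distinct order \<and> set order = E \<longrightarrow>
           (\<exists>t \<le> nat \<lceil>4 * S0 n E d \<eta> C * (real (max_deg n E) + 1) / \<epsilon>^2\<rceil>.
              stop_crit d E \<epsilon> ((cyclic_step d order ^^ t) (emp_init d \<eta> C))))
       \<and> (\<forall>\<Gamma> :: nat \<Rightarrow> mvec. \<Gamma> 0 = emp_init d \<eta> C \<and>
           (\<forall>t. \<not> stop_crit d E \<epsilon> (\<Gamma> t) \<longrightarrow>
              (\<exists>e\<in>E. (\<forall>e'\<in>E. viol d (\<Gamma> t) e' \<le> viol d (\<Gamma> t) e)
                     \<and> \<Gamma> (Suc t) = greedy_update d e (\<Gamma> t)))
           \<longrightarrow> (\<exists>t \<le> nat \<lceil>4 * S0 n E d \<eta> C / \<epsilon>^2\<rceil>. stop_crit d E \<epsilon> (\<Gamma> t)))"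
proof (cases "d = 0")
  case True
  then have "\<And>G. stop_crit d E \<epsilon> G" using assms(3) by (simp add: stop_crit_def viol_i_def viol_j_def)
  then show ?thesis by (metis le0 funpow_0)
next
  case False
  then have d: "0 < d" by simp
  have g: "gok n E" using assms(1) by (rule gok_of_graph)
  have fin: "finite E" using g by (simp add: gok_def)
  define K where "K = max_deg n E"
  have Kb: "\<And>v. v \<in> {1..n} \<Longrightarrow> card {f \<in> E. inc v f} \<le> K" unfolding K_def using fin by (rule deg_bound)
  have eps2: "0 < \<epsilon>^2" using assms(3) by simp
  have P0: "Phi n E d (emp_init d \<eta> C) \<le> S0 n E d \<eta> C" using d fin by (rule Phi_init)
  have I0: "invG d (emp_init d \<eta> C)" using d by (rule inv_init)
  show ?thesis
  proof (intro conjI allI impI)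
    fix order :: "(nat \<times> nat) list"
    assume o: "distinct order \<and> set order = E"
    define c where "c = \<epsilon>^2 / (4 * (real K + 1))"
    have c: "0 < c" unfolding c_def using eps2 by simp
    have "\<exists>t \<le> nat \<lceil>S0 n E d \<eta> C / c\<rceil>. stop_crit d E \<epsilon> ((cyclic_step d order ^^ t) (emp_init d \<eta> C))"
    proof (rule descent[OF c, where I = "\<lambda>t. invG d ((cyclic_step d order ^^ t) (emp_init d \<eta> C))"
          and \<Phi> = "\<lambda>t. Phi n E d ((cyclic_step d order ^^ t) (emp_init d \<eta> C))"])
      show "invG d ((cyclic_step d order ^^ 0) (emp_init d \<eta> C))" using I0 by simp
      show "Phi n E d ((cyclic_step d order ^^ 0) (emp_init d \<eta> C)) \<le> S0 n E d \<eta> C" using P0 by simp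
      show "0 \<le> Phi n E d ((cyclic_step d order ^^ t) (emp_init d \<eta> C))"
        if "invG d ((cyclic_step d order ^^ t) (emp_init d \<eta> C))" for t using that by (rule Phi_nonneg)
    next
      fix t
      assume iv: "invG d ((cyclic_step d order ^^ t) (emp_init d \<eta> C))"
        and ns: "\<not> stop_crit d E \<epsilon> ((cyclic_step d order ^^ t) (emp_init d \<eta> C))"
      note p = pass[OF d g iv conjunct1[OF o] conjunct2[OF o] ns assms(3) Kb]
      have "c \<le> Phi n E d ((cyclic_step d order ^^ t) (emp_init d \<eta> C)) - Phi n E d ((cyclic_step d order ^^ Suc t) (emp_init d \<eta> C))"
        using p(2) unfolding c_def by (simp add: divide_le_eq mult.commute)
      then show "invG d ((cyclic_step d order ^^ Suc t) (emp_init d \<eta> C)) \<and>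
          Phi n E d ((cyclic_step d order ^^ Suc t) (emp_init d \<eta> C)) \<le> Phi n E d ((cyclic_step d order ^^ t) (emp_init d \<eta> C)) - c"
        using p(1) by simp
    qed
    moreover have "S0 n E d \<eta> C / c = 4 * S0 n E d \<eta> C * (real (max_deg n E) + 1) / \<epsilon>^2"
      unfolding c_def K_def using eps2 by (simp add: field_simps)
    ultimately show "\<exists>t \<le> nat \<lceil>4 * S0 n E d \<eta> C * (real (max_deg n E) + 1) / \<epsilon>^2\<rceil>.
              stop_crit d E \<epsilon> ((cyclic_step d order ^^ t) (emp_init d \<eta> C))" by simp
  next
    fix \<Gamma> :: "nat \<Rightarrow> mvec"
    assume a: "\<Gamma> 0 = emp_init d \<eta> C \<and>
           (\<forall>t. \<not> stop_crit d E \<epsilon> (\<Gamma> t) \<longrightarrow>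
              (\<exists>e\<in>E. (\<forall>e'\<in>E. viol d (\<Gamma> t) e' \<le> viol d (\<Gamma> t) e)
                     \<and> \<Gamma> (Suc t) = greedy_update d e (\<Gamma> t)))"
    define c where "c = \<epsilon>^2 / 4"
    have c: "0 < c" unfolding c_def using eps2 by simp
    have "\<exists>t \<le> nat \<lceil>S0 n E d \<eta> C / c\<rceil>. stop_crit d E \<epsilon> (\<Gamma> t)"
    proof (rule descent[OF c, where I = "\<lambda>t. invG d (\<Gamma> t)" and \<Phi> = "\<lambda>t. Phi n E d (\<Gamma> t)"])
      show "invG d (\<Gamma> 0)" using I0 a by simp
      show "Phi n E d (\<Gamma> 0) \<le> S0 n E d \<eta> C" using P0 a by simp
      show "0 \<le> Phi n E d (\<Gamma> t)" if "invG d (\<Gamma> t)" for t using that by (rule Phi_nonneg)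
    next
      fix t
      assume iv: "invG d (\<Gamma> t)" and ns: "\<not> stop_crit d E \<epsilon> (\<Gamma> t)"
      obtain e where e: "e \<in> E" and mx: "\<forall>e'\<in>E. viol d (\<Gamma> t) e' \<le> viol d (\<Gamma> t) e"
        and nx: "\<Gamma> (Suc t) = greedy_update d e (\<Gamma> t)" using a ns by blast
      obtain e' where e': "e' \<in> E" and ve: "\<epsilon> \<le> viol_i d (\<Gamma> t) e' \<or> \<epsilon> \<le> viol_j d (\<Gamma> t) e'"
        using ns unfolding stop_crit_def by (auto simp: not_less)
      have "\<epsilon> \<le> viol d (\<Gamma> t) e'" using ve unfolding viol_def by auto
      then have "\<epsilon> \<le> viol d (\<Gamma> t) e" using mx e' by (meson order_trans)
      then have "\<epsilon>^2 \<le> (viol d (\<Gamma> t) e)^2" using assms(3) by (intro power_mono) auto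
      also have "\<dots> \<le> 4 * (Phi n E d (\<Gamma> t) - Phi n E d (\<Gamma> (Suc t)))"
        unfolding nx by (rule greedy_step(2)[OF d g iv e])
      finally have "c \<le> Phi n E d (\<Gamma> t) - Phi n E d (\<Gamma> (Suc t))" unfolding c_def by simp
      then show "invG d (\<Gamma> (Suc t)) \<and> Phi n E d (\<Gamma> (Suc t)) \<le> Phi n E d (\<Gamma> t) - c"
        using greedy_step(1)[OF d g iv e] nx by simp
    qed
    moreover have "S0 n E d \<eta> C / c = 4 * S0 n E d \<eta> C / \<epsilon>^2"
      unfolding c_def using eps2 by (simp add: field_simps)
    ultimately show "\<exists>t \<le> nat \<lceil>4 * S0 n E d \<eta> C / \<epsilon>^2\<rceil>. stop_crit d E \<epsilon> (\<Gamma> t)" by simp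
  qed
qed

end
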